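(* Let $\gamma,\delta$ be constants and $u_0,u_1$ nonzero constants. Let $\mathfrak p_n,\mathfrak q_n$ be the $7$-periodic integer sequences with $\mathfrak p_n=1$ if $n\equiv1$ or $5\pmod 7$ and $\mathfrak p_n=0$ otherwise, and $\mathfrak q_n=1$ if $n\equiv 0,3$ or $6\pmod 7$ and $\mathfrak q_n=0$ otherwise. Let $(d_n)_{n\in\mathbb Z}$ be a sequence of nonzero numbers satisfying the non-autonomous Somos-5 recurrence $$d_{n-3}d_{n+2}=\gamma_n\,d_{n-2}d_{n+1}+\delta_n\,d_{n-1}d_n,\qquad \gamma_n=\gamma\,u_0^{\mathfrak p_{n+1}}u_1^{\mathfrak p_{n-3}},\quad \delta_n=\delta\,u_0^{\mathfrak q_{n+1}}u_1^{\mathfrak q_{n-3}},$$ and let $(\eta_n)_{n\in\mathbb Z}$ be an integer sequence satisfying $\eta_{n+3}-\eta_{n+2}-\eta_{n+1}+\eta_n=\mathfrak p_n-\mathfrak q_n$ for all $n$. Define $$k_n=u_0^{\eta_{n+3}+\eta_n}u_1^{\eta_{n-1}+\eta_{n-4}}\,d_nd_{n-3},\qquad l_n=u_0^{\eta_{n+2}+\eta_{n+1}}u_1^{\eta_{n-2}+\eta_{n-3}}\,d_{n-1}d_{n-2}.$$ Then $(k_n,l_n)$ satisfies the system $$k_{n+1}k_{n-1}=\gamma\,k_nl_n+\delta\,l_n^2,\qquad l_{n+1}l_{n-1}=k_nl_n.$$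
   Context: This is the special case $a_1=a_3=0$, $a_2=1$, $a_5=\gamma$, $a_6=\delta$ of the system $k_{n+1}k_{n-1}=a_3k_n^2+a_5k_nl_n+a_6l_n^2$, $l_{n+1}l_{n-1}=a_1k_n^2+a_2k_nl_n+a_3l_n^2$. *)

theory Defs
  imports Complex_Main
begin

definition frakp :: "int \<Rightarrow> int" where
  "frakp n = (if n mod 7 = 1 \<or> n mod 7 = 5 then 1 else 0)"

definition frakq :: "int \<Rightarrow> int" where
  "frakq n = (if n mod 7 = 0 \<or> n mod 7 = 3 \<or> n mod 7 = 6 then 1 else 0)"

end

theory Submission
  imports Defs
begin

lemma mod7_cases:
  fixes n :: int
  obtains m r where "n = 7*m + r" "r \<in> {0,1,2,3,4,5,6}"
proof -
  have "n = 7*(n div 7) + n mod 7" by simp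
  moreover have "n mod 7 \<in> {0,1,2,3,4,5,6}" by simp presburger
  ultimately show ?thesis by (rule that)
qed

lemma per1: "frakp (n+1) + frakp (n-1) - frakq (n+1) - frakq (n-1) + frakp n = 0"
proof -
  obtain m r where n: "n = 7*m + r" "r \<in> {0,1,2,3,4,5,6}" by (rule mod7_cases)
  show ?thesis using n(2) unfolding n(1) frakp_def frakq_def
    by (elim insertE emptyE) (simp_all add: mod_simps, presburger+)
qed

lemma per2: "frakp (n+1) + frakp n + frakp (n-1) - frakq (n+1) - frakq (n-1) = 0"
proof -
  obtain m r where n: "n = 7*m + r" "r \<in> {0,1,2,3,4,5,6}" by (rule mod7_cases)
  show ?thesis using n(2) unfolding n(1) frakp_def frakq_def
    by (elim insertE emptyE) (simp_all add: mod_simps, presburger+)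
qed

theorem theorem5:
  fixes \<gamma> \<delta> u0 u1 :: "'a :: field"
    and d k l :: "int \<Rightarrow> 'a"
    and \<eta> :: "int \<Rightarrow> int"
  assumes u0: "u0 \<noteq> 0" and u1: "u1 \<noteq> 0"
    and d_nz: "\<And>n. d n \<noteq> 0"
    and somos: "\<And>n. d (n - 3) * d (n + 2)
        = (\<gamma> * u0 powi frakp (n + 1) * u1 powi frakp (n - 3)) * d (n - 2) * d (n + 1)
        + (\<delta> * u0 powi frakq (n + 1) * u1 powi frakq (n - 3)) * d (n - 1) * d n"
    and eta: "\<And>n. \<eta> (n + 3) - \<eta> (n + 2) - \<eta> (n + 1) + \<eta> n = frakp n - frakq n"
    and k_def: "\<And>n. k n = u0 powi (\<eta> (n + 3) + \<eta> n) * u1 powi (\<eta> (n - 1) + \<eta> (n - 4)) * d n * d (n - 3)"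
    and l_def: "\<And>n. l n = u0 powi (\<eta> (n + 2) + \<eta> (n + 1)) * u1 powi (\<eta> (n - 2) + \<eta> (n - 3)) * d (n - 1) * d (n - 2)"
  shows "\<forall>n. k (n + 1) * k (n - 1) = \<gamma> * k n * l n + \<delta> * (l n)^2
           \<and> l (n + 1) * l (n - 1) = k n * l n"
proof (intro allI conjI)
  fix n :: int
  show "l (n + 1) * l (n - 1) = k n * l n"
  proof -
    have "l (n + 1) * l (n - 1) = (u0 powi (\<eta> (n + 3) + \<eta> (n + 2)) * u0 powi (\<eta> (n + 1) + \<eta> n))
       * (u1 powi (\<eta> (n - 1) + \<eta> (n - 2)) * u1 powi (\<eta> (n - 3) + \<eta> (n - 4))) * (d n * d (n - 1) * d (n - 2) * d (n - 3))"
      using l_def[of "n+1"] l_def[of "n-1"] by (simp add: algebra_simps)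
    also have "\<dots> = (u0 powi (\<eta> (n + 3) + \<eta> n) * u0 powi (\<eta> (n + 2) + \<eta> (n + 1)))
       * (u1 powi (\<eta> (n - 1) + \<eta> (n - 4)) * u1 powi (\<eta> (n - 2) + \<eta> (n - 3))) * (d n * d (n - 1) * d (n - 2) * d (n - 3))"
      using u0 u1 by (simp add: power_int_add[symmetric] algebra_simps)
    also have "\<dots> = k n * l n" using k_def[of n] l_def[of n] by (simp add: algebra_simps)
    finally show ?thesis .
  qed
  define A0 where "A0 = \<eta> (n + 4) + \<eta> (n + 1) + \<eta> (n + 2) + \<eta> (n - 1)"
  define A1 where "A1 = \<eta> n + \<eta> (n - 3) + \<eta> (n - 2) + \<eta> (n - 5)"
  define E0 where "E0 = \<eta> (n + 3) + \<eta> n + \<eta> (n + 2) + \<eta> (n + 1)"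
  define E1 where "E1 = \<eta> (n - 1) + \<eta> (n - 4) + \<eta> (n - 2) + \<eta> (n - 3)"
  define F0 where "F0 = \<eta> (n + 2) + \<eta> (n + 1) + (\<eta> (n + 2) + \<eta> (n + 1))"
  define F1 where "F1 = \<eta> (n - 2) + \<eta> (n - 3) + (\<eta> (n - 2) + \<eta> (n - 3))"
  have e1: "A0 + frakp n = E0" "A1 + frakp (n - 4) = E1" "A0 + frakq n = F0" "A1 + frakq (n - 4) = F1"
    using eta[of n] eta[of "n+1"] eta[of "n-1"] eta[of "n-3"] eta[of "n-5"] eta[of "n-4"]
      per1[of n] per1[of "n-4"] per2[of n] per2[of "n-4"]
    unfolding A0_def A1_def E0_def E1_def F0_def F1_def by (simp_all add: algebra_simps)
  have s: "d (n - 4) * d (n + 1)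
        = (\<gamma> * u0 powi frakp n * u1 powi frakp (n - 4)) * d (n - 3) * d n
        + (\<delta> * u0 powi frakq n * u1 powi frakq (n - 4)) * d (n - 2) * d (n - 1)"
    using somos[of "n-1"] by (simp add: algebra_simps)
  have "k (n + 1) * k (n - 1) = u0 powi A0 * u1 powi A1 * d (n - 1) * d (n - 2) * (d (n - 4) * d (n + 1))"
    using k_def[of "n+1"] k_def[of "n-1"] u0 u1 unfolding A0_def A1_def
    by (simp add: power_int_add algebra_simps)
  also have "\<dots> = \<gamma> * (u0 powi A0 * u0 powi frakp n) * (u1 powi A1 * u1 powi frakp (n - 4)) * d (n - 1) * d (n - 2) * d (n - 3) * d n
     + \<delta> * (u0 powi A0 * u0 powi frakq n) * (u1 powi A1 * u1 powi frakq (n - 4)) * d (n - 1) * d (n - 2) * d (n - 2) * d (n - 1)"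
    unfolding s by (simp add: algebra_simps)
  also have "\<dots> = \<gamma> * u0 powi E0 * u1 powi E1 * d (n - 1) * d (n - 2) * d (n - 3) * d n
     + \<delta> * u0 powi F0 * u1 powi F1 * d (n - 1) * d (n - 2) * d (n - 2) * d (n - 1)"
    using u0 u1 by (simp add: power_int_add[symmetric] e1)
  also have "\<dots> = \<gamma> * k n * l n + \<delta> * (l n)^2"
  proof -
    have f0: "u0 powi F0 = u0 powi (\<eta> (n + 2) + \<eta> (n + 1)) * u0 powi (\<eta> (n + 2) + \<eta> (n + 1))"
      unfolding F0_def using u0 by (intro power_int_add) simp
    have f1: "u1 powi F1 = u1 powi (\<eta> (n - 2) + \<eta> (n - 3)) * u1 powi (\<eta> (n - 2) + \<eta> (n - 3))"
      unfolding F1_def using u1 by (intro power_int_add) simp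
    have g: "u0 powi E0 * u1 powi E1 = u0 powi (\<eta> (n + 3) + \<eta> n) * u1 powi (\<eta> (n - 1) + \<eta> (n - 4))
       * (u0 powi (\<eta> (n + 2) + \<eta> (n + 1)) * u1 powi (\<eta> (n - 2) + \<eta> (n - 3)))"
    proof -
      have "E0 = (\<eta> (n + 3) + \<eta> n) + (\<eta> (n + 2) + \<eta> (n + 1))" by (simp add: E0_def)
      hence a: "u0 powi E0 = u0 powi (\<eta> (n + 3) + \<eta> n) * u0 powi (\<eta> (n + 2) + \<eta> (n + 1))"
        using u0 by (simp add: power_int_add)
      have "E1 = (\<eta> (n - 1) + \<eta> (n - 4)) + (\<eta> (n - 2) + \<eta> (n - 3))" by (simp add: E1_def)
      hence b: "u1 powi E1 = u1 powi (\<eta> (n - 1) + \<eta> (n - 4)) * u1 powi (\<eta> (n - 2) + \<eta> (n - 3))"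
        using u1 by (simp add: power_int_add)
      show ?thesis unfolding a b by (simp only: mult_ac)
    qed
    show ?thesis unfolding f0 f1 k_def[of n] l_def[of n] power2_eq_square
      using g by (simp add: algebra_simps)
  qed
  finally show "k (n + 1) * k (n - 1) = \<gamma> * k n * l n + \<delta> * (l n)^2" .
qed

end
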